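(* Let $F\subseteq\omega$ be a $\Pi^1_1$ set. Then there exists a computable function $g$ such that for every $p\in\omega$, $g(p)$ is an $\iota$-index of a c.e. effective quasi-Polish space $X=\iota(g(p))$ such that $X$ is metrizable if $p\in F$, and $X$ is not $T_1$ if $p\notin F$.
   Context: Let $(W_n)$ be a standard numbering of c.e. subsets of $\omega$, $V_n=\{(i,j)\mid\langle i,j\rangle\in W_n\}$, and $t$ a computable function with $V_{t(n)}$ the transitive closure of $V_n$. For a transitive relation $\prec$ on $\omega$, an ideal is a non-empty lower, directed subset of $\omega$; $\mathcal{I}(\prec)$ is the space of ideals with topology generated by $[k]_\prec=\{I\mid k\in I\}$, an effective space with basic opens numbered by $k$. The numbering $\iota$ is defined by $\iota(n)=\mathcal{I}(V_{t(n)})$; an $\iota$-index of $X$ is an $n$ with $X=\iota(n)$. Every $\iota(n)$ is an effective quasi-Polish space; it is c.e. (overt) if $\{k\mid[k]_{V_{t(n)}}\neq\emptyset\}$ is c.e. *)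

theory Defs
  imports "HOL-Analysis.Analysis" "HOL-Library.Nat_Bijection"
begin

datatype recf =
    Zr
  | Sc
  | Proj nat
  | Comp recf "recf list"
  | Prim recf recf
  | Mn recf

inductive eval :: "recf \<Rightarrow> nat list \<Rightarrow> nat \<Rightarrow> bool" where
  ev_Zr: "eval Zr xs 0"
| ev_Sc: "eval Sc (x # xs) (Suc x)"
| ev_Proj: "i < length xs \<Longrightarrow> eval (Proj i) xs (xs ! i)"
| ev_Comp: "list_all2 (\<lambda>g y. eval g xs y) gs ys \<Longrightarrow> eval f ys z \<Longrightarrow> eval (Comp f gs) xs z"
| ev_Prim0: "eval f xs y \<Longrightarrow> eval (Prim f g) (0 # xs) y"
| ev_PrimS: "eval (Prim f g) (n # xs) y \<Longrightarrow> eval g (y # n # xs) z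
             \<Longrightarrow> eval (Prim f g) (Suc n # xs) z"
| ev_Mn: "eval f (n # xs) 0 \<Longrightarrow> (\<forall>m<n. \<exists>y. eval f (m # xs) (Suc y))
          \<Longrightarrow> eval (Mn f) xs n"

fun encode :: "recf \<Rightarrow> nat" where
  "encode Zr = prod_encode (0, 0)"
| "encode Sc = prod_encode (1, 0)"
| "encode (Proj i) = prod_encode (2, i)"
| "encode (Comp f gs) = prod_encode (3, prod_encode (encode f, list_encode (map encode gs)))"
| "encode (Prim f g) = prod_encode (4, prod_encode (encode f, encode g))"
| "encode (Mn f) = prod_encode (5, encode f)"

text \<open>Standard numbering of c.e. sets: W n is the domain of the unary program with code n
  (empty if n is not a code).\<close>
definition W :: "nat \<Rightarrow> nat set" where
  "W n = {x. \<exists>r y. encode r = n \<and> eval r [x] y}"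

definition computable :: "(nat \<Rightarrow> nat) \<Rightarrow> bool" where
  "computable g \<longleftrightarrow> (\<exists>r. \<forall>p. eval r [p] (g p))"

definition ce_set :: "nat set \<Rightarrow> bool" where
  "ce_set A \<longleftrightarrow> (\<exists>n. A = W n)"

definition computable_rel2 :: "(nat \<Rightarrow> nat \<Rightarrow> bool) \<Rightarrow> bool" where
  "computable_rel2 R \<longleftrightarrow> (\<exists>r. \<forall>a b. eval r [a, b] (if R a b then 1 else 0))"

text \<open>Pi^1_1 subsets of omega (Kleene normal form): p \<in> F iff for every f : omega \<rightarrow> omega
  there is n with R(p, code of the initial segment f(0),...,f(n-1)), R computable.\<close>
definition Pi11 :: "nat set \<Rightarrow> bool" where
  "Pi11 F \<longleftrightarrow> (\<exists>R. computable_rel2 R \<and>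
     (\<forall>p. p \<in> F \<longleftrightarrow> (\<forall>f::nat \<Rightarrow> nat. \<exists>n. R p (list_encode (map f [0..<n])))))"

definition V :: "nat \<Rightarrow> (nat \<times> nat) set" where
  "V n = {(i, j). prod_encode (i, j) \<in> W n}"

definition is_ideal :: "(nat \<times> nat) set \<Rightarrow> nat set \<Rightarrow> bool" where
  "is_ideal R I \<longleftrightarrow> I \<noteq> {}
     \<and> (\<forall>j\<in>I. \<forall>i. (i, j) \<in> R \<longrightarrow> i \<in> I)
     \<and> (\<forall>i\<in>I. \<forall>j\<in>I. \<exists>k\<in>I. (i, k) \<in> R \<and> (j, k) \<in> R)"

definition basic_open :: "(nat \<times> nat) set \<Rightarrow> nat \<Rightarrow> nat set set" where
  "basic_open R k = {I. is_ideal R I \<and> k \<in> I}"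

definition ideal_space :: "(nat \<times> nat) set \<Rightarrow> nat set topology" where
  "ideal_space R = topology_generated_by (range (basic_open R))"

definition iota :: "nat \<Rightarrow> nat set topology" where
  "iota n = ideal_space ((V n)\<^sup>+)"

definition ce_space_index :: "nat \<Rightarrow> bool" where
  "ce_space_index n \<longleftrightarrow> ce_set {k. basic_open ((V n)\<^sup>+) k \<noteq> {}}"

end

theory Submission
  imports Defs
begin

lemma eval_det: "eval f xs y \<Longrightarrow> eval f xs y' \<Longrightarrow> y = y'"
proof (induction f xs y arbitrary: y' rule: eval.induct)
  case (ev_Zr xs) from ev_Zr.prems show ?case by (cases rule: eval.cases) (use ev_Zr in auto)
next
  case (ev_Sc x xs) from ev_Sc.prems show ?case by (cases rule: eval.cases) (use ev_Sc in auto)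
next
  case (ev_Proj i xs) from ev_Proj.prems show ?case by (cases rule: eval.cases) (use ev_Proj in auto)
next
  case (ev_Comp xs gs ys f z)
  from ev_Comp.prems obtain ys' where A: "list_all2 (\<lambda>g y. eval g xs y) gs ys'" and B: "eval f ys' y'"
    by (cases rule: eval.cases) auto
  have "ys = ys'" using ev_Comp.IH(1) A
  proof (induction gs arbitrary: ys ys')
    case Nil then show ?case by simp
  next
    case (Cons a gs)
    then show ?case by (auto simp: list_all2_Cons1)
  qed
  then show ?case using ev_Comp.IH(2) B by simp
next
  case (ev_Prim0 f xs y g) from ev_Prim0.prems show ?case by (cases rule: eval.cases) (use ev_Prim0 in auto)
next
  case (ev_PrimS f g n xs y z) from ev_PrimS.prems show ?case by (cases rule: eval.cases) (use ev_PrimS in auto)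
next
  case (ev_Mn f n xs)
  from ev_Mn.prems obtain n' where e: "y' = n'" "eval f (n' # xs) 0" "\<forall>m<n'. \<exists>y. eval f (m # xs) (Suc y)"
    by (cases rule: eval.cases) auto
  show ?case
  proof (rule ccontr)
    assume "n \<noteq> y'"
    then consider "n < n'" | "n' < n" using e(1) by linarith
    then show False
    proof cases
      case 1 then obtain y where "eval f (n # xs) (Suc y)" using e by auto
      then show False using ev_Mn.IH(1) by fastforce
    next
      case 2 then obtain y where "eval f (n' # xs) (Suc y)" "\<forall>y'. eval f (n' # xs) y' \<longrightarrow> Suc y = y'"
        using ev_Mn.IH(2) by blast
      then show False using e by fastforce
    qed
  qed
qed


lemma C1: "eval g xs a \<Longrightarrow> eval f [a] z \<Longrightarrow> eval (Comp f [g]) xs z"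
  by (rule ev_Comp) auto
lemma C2: "eval g1 xs a \<Longrightarrow> eval g2 xs b \<Longrightarrow> eval f [a, b] z \<Longrightarrow> eval (Comp f [g1, g2]) xs z"
  by (rule ev_Comp) auto
lemma C3: "eval g1 xs a \<Longrightarrow> eval g2 xs b \<Longrightarrow> eval g3 xs c \<Longrightarrow> eval f [a, b, c] z \<Longrightarrow> eval (Comp f [g1, g2, g3]) xs z"
  by (rule ev_Comp) auto
lemma P0: "eval (Proj 0) (x # xs) x" using ev_Proj[of 0 "x # xs"] by simp
lemma P1: "eval (Proj 1) (x # y # xs) y" using ev_Proj[of 1 "x # y # xs"] by simp
lemma P2: "eval (Proj 2) (x # y # z # xs) z" using ev_Proj[of 2 "x # y # z # xs"] by simp
lemma P3: "eval (Proj 3) (x # y # z # w # xs) w" using ev_Proj[of 3 "x # y # z # w # xs"] by simp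
lemma eqI: "eval f xs z \<Longrightarrow> z = z' \<Longrightarrow> eval f xs z'" by simp
lemma ScI: "eval Sc [x] (Suc x)" by (rule ev_Sc)
lemma ZrI: "eval Zr xs 0" by (rule ev_Zr)

fun K :: "nat \<Rightarrow> recf" where
  "K 0 = Zr" | "K (Suc n) = Comp Sc [K n]"
lemma KI: "eval (K n) xs n"
  by (induction n) (auto intro: C1 ScI ZrI)

lemmas evB = C1 C2 C3 P0 P1 P2 P3 ScI ZrI KI

definition "ADD = Prim (Proj 0) (Comp Sc [Proj 0])"
lemma ADDI: "eval ADD [n, m] (n + m)"
  unfolding ADD_def
proof (induction n)
  case 0 show ?case by (rule ev_Prim0, rule eqI, (rule evB)+, simp)
next
  case (Suc n) show ?case by (rule ev_PrimS[OF Suc.IH], rule eqI, (rule evB)+, simp)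
qed

definition "MUL = Prim Zr (Comp ADD [Proj 0, Proj 2])"
lemma MULI: "eval MUL [n, m] (n * m)"
  unfolding MUL_def
proof (induction n)
  case 0 show ?case by (rule ev_Prim0, rule eqI, (rule evB)+, simp)
next
  case (Suc n) show ?case by (rule ev_PrimS[OF Suc.IH], rule eqI, (rule evB ADDI)+, simp)
qed

definition "PRED = Prim Zr (Proj 1)"
lemma PREDI: "eval PRED [n] (n - 1)"
  unfolding PRED_def
proof (induction n)
  case 0 show ?case by (rule ev_Prim0, rule eqI, (rule evB)+, simp)
next
  case (Suc n) show ?case by (rule ev_PrimS[OF Suc.IH], rule eqI, (rule evB)+, simp)
qed

definition "SUBR = Prim (Proj 0) (Comp PRED [Proj 0])"
lemma SUBRI: "eval SUBR [b, a] (a - b)"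
  unfolding SUBR_def
proof (induction b)
  case 0 show ?case by (rule ev_Prim0, rule eqI, (rule evB)+, simp)
next
  case (Suc n) show ?case by (rule ev_PrimS[OF Suc.IH], rule eqI, (rule evB PREDI)+, simp)
qed

definition "SUB = Comp SUBR [Proj 1, Proj 0]"
lemma SUBI: "eval SUB [a, b] (a - b)"
  unfolding SUB_def by (rule eqI, (rule evB SUBRI)+, simp)

definition "ONEM = Comp SUB [K 1, Proj 0]"
lemma ONEMI: "eval ONEM [z] (1 - z)"
  unfolding ONEM_def by (rule eqI, (rule evB SUBI)+, simp)

definition "LE = Comp ONEM [SUB]"
lemma LEI: "eval LE [a, b] (1 - (a - b))"
  unfolding LE_def by (rule eqI, (rule evB SUBI ONEMI)+, simp)

definition "EQT = Comp MUL [LE, Comp LE [Proj 1, Proj 0]]"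
lemma EQI: "eval EQT [a, b] ((1 - (a - b)) * (1 - (b - a)))"
  unfolding EQT_def by (rule eqI, (rule evB LEI MULI)+, simp)

definition "IFZ = Comp ADD [Comp MUL [Proj 1, Comp ONEM [Proj 0]], Comp MUL [Proj 2, Comp ONEM [Comp ONEM [Proj 0]]]]"
lemma IFZI: "eval IFZ [z, a, b] (if z = 0 then a else b)"
  unfolding IFZ_def by (rule eqI, (rule evB ADDI MULI ONEMI)+, simp)

definition "TRI = Prim Zr (Comp ADD [Proj 0, Comp Sc [Proj 1]])"
lemma TRII: "eval TRI [n] (triangle n)"
  unfolding TRI_def
proof (induction n)
  case 0 show ?case by (rule ev_Prim0, rule eqI, (rule evB)+, simp)
next
  case (Suc n) show ?case by (rule ev_PrimS[OF Suc.IH], rule eqI, (rule evB ADDI)+, simp)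
qed

definition "PE = Comp ADD [Comp TRI [ADD], Proj 0]"
lemma PEI: "eval PE [a, b] (prod_encode (a, b))"
  unfolding PE_def by (rule eqI, (rule evB ADDI TRII)+, simp add: prod_encode_def)


primrec cntf :: "nat \<Rightarrow> nat \<Rightarrow> nat" where
  "cntf 0 x = 0"
| "cntf (Suc k) x = cntf k x + (1 - (triangle (Suc k) - x))"

definition "ssf x = cntf x x"
definition "fstf x = x - triangle (ssf x)"
definition "sndf x = ssf x - fstf x"

definition "CNT = Prim Zr (Comp ADD [Proj 0, Comp LE [Comp TRI [Comp Sc [Proj 1]], Proj 2]])"
lemma CNTI: "eval CNT [n, x] (cntf n x)"
  unfolding CNT_def
proof (induction n)
  case 0 show ?case by (rule ev_Prim0, rule eqI, (rule evB)+, simp)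
next
  case (Suc n) show ?case by (rule ev_PrimS[OF Suc.IH], rule eqI, (rule evB ADDI LEI TRII)+, simp)
qed

definition "SS = Comp CNT [Proj 0, Proj 0]"
lemma SSI: "eval SS [x] (ssf x)"
  unfolding SS_def ssf_def by (rule eqI, (rule evB CNTI)+, simp)
definition "FST = Comp SUB [Proj 0, Comp TRI [SS]]"
lemma FSTI: "eval FST [x] (fstf x)"
  unfolding FST_def fstf_def by (rule eqI, (rule evB SUBI TRII SSI)+, simp)
definition "SND = Comp SUB [SS, FST]"
lemma SNDI: "eval SND [x] (sndf x)"
  unfolding SND_def sndf_def by (rule eqI, (rule evB SUBI FSTI SSI)+, simp)

definition "hdf c = fstf (c - 1)"
definition "tlf c = sndf (c - 1)"
definition "HD = Comp FST [PRED]"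
lemma HDI: "eval HD [x] (hdf x)"
  unfolding HD_def hdf_def by (rule eqI, (rule evB PREDI FSTI)+, simp)
definition "TL = Comp SND [PRED]"
lemma TLI: "eval TL [x] (tlf x)"
  unfolding TL_def tlf_def by (rule eqI, (rule evB PREDI SNDI)+, simp)

definition "tlk k r = (tlf ^^ k) r"
definition "TLK = Prim (Proj 0) (Comp TL [Proj 0])"
lemma TLKI: "eval TLK [k, r] (tlk k r)"
  unfolding TLK_def tlk_def
proof (induction k)
  case 0 show ?case by (rule ev_Prim0, rule eqI, (rule evB)+, simp)
next
  case (Suc n) show ?case by (rule ev_PrimS[OF Suc.IH], rule eqI, (rule evB TLI)+, simp)
qed

primrec fwa :: "nat \<Rightarrow> nat \<Rightarrow> nat" where
  "fwa 0 r = 0"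
| "fwa (Suc k) r = (if tlk k r = 0 then fwa k r else Suc (prod_encode (hdf (tlk k r), fwa k r)))"

definition "FWA = Prim Zr (Comp IFZ [Comp TLK [Proj 1, Proj 2], Proj 0,
   Comp Sc [Comp PE [Comp HD [Comp TLK [Proj 1, Proj 2]], Proj 0]]])"
lemma FWAI: "eval FWA [k, r] (fwa k r)"
  unfolding FWA_def
proof (induction k)
  case 0 show ?case by (rule ev_Prim0, rule eqI, (rule evB)+, simp)
next
  case (Suc n) show ?case by (rule ev_PrimS[OF Suc.IH], rule eqI, (rule evB IFZI TLKI PEI HDI)+, simp)
qed

definition "fwd r = fwa r r"
definition "FWD = Comp FWA [Proj 0, Proj 0]"
lemma FWDI: "eval FWD [r] (fwd r)"
  unfolding FWD_def fwd_def by (rule eqI, (rule evB FWAI)+, simp)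

definition "Rv R p c = (if R p c then 1 else (0::nat))"

primrec dsm :: "(nat \<Rightarrow> nat \<Rightarrow> bool) \<Rightarrow> nat \<Rightarrow> nat \<Rightarrow> nat \<Rightarrow> nat" where
  "dsm R 0 p c = 0"
| "dsm R (Suc k) p c = dsm R k p c + Rv R p (fwd (tlk k c))"

definition "DEAD r0 = Prim Zr (Comp ADD [Proj 0, Comp r0 [Proj 2, Comp FWD [Comp TLK [Proj 1, Proj 3]]]])"
lemma DEADI:
  assumes hr: "\<And>a b. eval r0 [a, b] (Rv R a b)"
  shows "eval (DEAD r0) [n, p, c] (dsm R n p c)"
  unfolding DEAD_def
proof (induction n)
  case 0 show ?case by (rule ev_Prim0, rule eqI, (rule evB)+, simp)
next
  case (Suc n) show ?case by (rule ev_PrimS[OF Suc.IH], rule eqI, (rule evB ADDI hr FWDI TLKI)+, simp)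
qed

definition "deadc R p c = dsm R (Suc c) p c"
definition "DEADC r0 = Comp (DEAD r0) [Comp Sc [Proj 1], Proj 0, Proj 1]"
lemma DEADCI:
  assumes hr: "\<And>a b. eval r0 [a, b] (Rv R a b)"
  shows "eval (DEADC r0) [p, c] (deadc R p c)"
  unfolding DEADC_def deadc_def by (rule eqI, (rule evB DEADI[OF hr])+, simp)

definition "bad R p i j = (1 - (1 - j)) * (((1 - i) + (1 - (j - 1))) +
   ((1 - (1 - (tlf (j - 1) - (i - 1))) * (1 - ((i - 1) - tlf (j - 1)))) + deadc R p (j - 1)))"

definition "BAD r0 = Comp MUL [Comp ONEM [Comp ONEM [Proj 2]],
  Comp ADD [Comp ADD [Comp ONEM [Proj 1], Comp LE [Proj 2, K 1]],
            Comp ADD [Comp ONEM [Comp EQT [Comp TL [Comp PRED [Proj 2]], Comp PRED [Proj 1]]],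
                      Comp (DEADC r0) [Proj 0, Comp PRED [Proj 2]]]]]"
lemma BADI:
  assumes hr: "\<And>a b. eval r0 [a, b] (Rv R a b)"
  shows "eval (BAD r0) [p, i, j] (bad R p i j)"
  unfolding BAD_def bad_def by (rule eqI, (rule evB MULI ADDI ONEMI LEI EQI TLI PREDI DEADCI[OF hr])+, simp)

definition "H r0 = Comp (BAD r0) [Proj 1, Comp FST [Proj 2], Comp SND [Proj 2]]"
lemma HI:
  assumes hr: "\<And>a b. eval r0 [a, b] (Rv R a b)"
  shows "eval (H r0) [a, p, x] (bad R p (fstf x) (sndf x))"
  unfolding H_def by (rule eqI, (rule evB BADI[OF hr] FSTI SNDI)+, simp)

definition "Prog r0 p = Comp (Mn (H r0)) [K p, Proj 0]"

lemma Prog_dom: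
  assumes hr: "\<And>a b. eval r0 [a, b] (Rv R a b)"
  shows "(\<exists>y. eval (Prog r0 p) [x] y) \<longleftrightarrow> bad R p (fstf x) (sndf x) = 0"
proof
  assume "\<exists>y. eval (Prog r0 p) [x] y"
  then obtain y where "eval (Prog r0 p) [x] y" by blast
  then obtain ys where A: "list_all2 (\<lambda>g y. eval g [x] y) [K p, Proj 0] ys" and B: "eval (Mn (H r0)) ys y"
    unfolding Prog_def by (cases rule: eval.cases) auto
  from A obtain u v where "ys = [u, v]" "eval (K p) [x] u" "eval (Proj 0) [x] v"
    by (auto simp: list_all2_Cons1)
  then have ys: "ys = [p, x]" using eval_det KI P0 by metis
  from B have "eval (H r0) [y, p, x] 0" unfolding ys by (cases rule: eval.cases) auto
  then show "bad R p (fstf x) (sndf x) = 0" using eval_det HI[OF hr] by metis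
next
  assume h: "bad R p (fstf x) (sndf x) = 0"
  have "eval (Prog r0 p) [x] 0" unfolding Prog_def
    by (rule C2, rule KI, rule P0, rule ev_Mn, use HI[OF hr, of 0 p x] h in simp, simp)
  then show "\<exists>y. eval (Prog r0 p) [x] y" by blast
qed

lemma triangle_mono: "m \<le> n \<Longrightarrow> triangle m \<le> triangle n"
  by (induction n) (auto simp: le_Suc_eq)

lemma le_triangle: "n \<le> triangle n"
  by (induction n) auto

lemma cntf_val:
  assumes "triangle s \<le> x" "x < triangle (Suc s)"
  shows "cntf n x = min n s"
proof (induction n)
  case 0 then show ?case by simp
next
  case (Suc k)
  show ?case
  proof (cases "Suc k \<le> s")
    case True
    then have "triangle (Suc k) \<le> x" using triangle_mono[OF True] assms by linarith
    then show ?thesis using Suc True by simp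
  next
    case False
    then have "triangle (Suc s) \<le> triangle (Suc k)" by (intro triangle_mono) simp
    then have "\<not> triangle (Suc k) \<le> x" using assms by linarith
    then show ?thesis using Suc False by simp
  qed
qed

lemma fstf_sndf: "fstf x = fst (prod_decode x) \<and> sndf x = snd (prod_decode x)"
proof -
  obtain a b where ab: "prod_decode x = (a, b)" by (cases "prod_decode x")
  then have x: "x = triangle (a + b) + a" using prod_decode_inverse[of x] by (simp add: prod_encode_def)
  have "ssf x = a + b" unfolding ssf_def
    using cntf_val[of "a + b" x x] x le_triangle[of "a+b"] by simp
  then show ?thesis unfolding fstf_def sndf_def using x ab by simp
qed

lemma hdf_code[simp]: "hdf (Suc (prod_encode (y, c))) = y"
  unfolding hdf_def using fstf_sndf by simp
lemma tlf_code[simp]: "tlf (Suc (prod_encode (y, c))) = c"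
  unfolding tlf_def using fstf_sndf by simp
lemma tlf_0[simp]: "tlf 0 = 0"
  unfolding tlf_def using fstf_sndf[of 0] prod_decode_inverse[of 0]
  by (metis diff_0_eq_0 le_prod_encode_2 le_zero_eq prod.collapse)

lemma tlf_list: "tlf (list_encode L) = list_encode (tl L)"
  by (cases L) auto

lemma tlk_code: "tlk k (list_encode L) = list_encode (drop k L)"
  unfolding tlk_def
  by (induction k) (auto simp: tlf_list drop_Suc tl_drop)

lemma fwa_code: "fwa k (list_encode L) = list_encode (rev (take k L))"
proof (induction k)
  case 0 then show ?case by simp
next
  case (Suc k)
  show ?case
  proof (cases "k < length L")
    case True
    then have d: "drop k L = L ! k # drop (Suc k) L" by (simp add: Cons_nth_drop_Suc)
    have "take (Suc k) L = take k L @ [L ! k]" using True by (simp add: take_Suc_conv_app_nth)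
    then show ?thesis using Suc True by (simp add: tlk_code d)
  next
    case False
    then have "drop k L = []" by simp
    then show ?thesis using Suc False by (simp add: tlk_code)
  qed
qed

lemma length_le_code: "length L \<le> list_encode L"
proof (induction L)
  case Nil then show ?case by simp
next
  case (Cons a L) then show ?case using le_prod_encode_2[of "list_encode L" a] by simp
qed

lemma fwd_code: "fwd (list_encode L) = list_encode (rev L)"
  unfolding fwd_def fwa_code using length_le_code[of L] by simp

lemma dsm_zero: "dsm R n p c = 0 \<longleftrightarrow> (\<forall>k<n. \<not> R p (fwd (tlk k c)))"
  by (induction n) (auto simp: Rv_def less_Suc_eq)

definition "aliveL R p L \<longleftrightarrow> (\<forall>k \<le> length L. \<not> R p (list_encode (rev (drop k L))))"

lemma deadc_code: "deadc R p (list_encode L) = 0 \<longleftrightarrow> aliveL R p L"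
proof -
  have "deadc R p (list_encode L) = 0 \<longleftrightarrow> (\<forall>k < Suc (list_encode L). \<not> R p (list_encode (rev (drop k L))))"
    unfolding deadc_def dsm_zero by (simp add: tlk_code fwd_code)
  also have "\<dots> \<longleftrightarrow> aliveL R p L"
    unfolding aliveL_def
  proof
    assume "\<forall>k < Suc (list_encode L). \<not> R p (list_encode (rev (drop k L)))"
    then show "\<forall>k\<le>length L. \<not> R p (list_encode (rev (drop k L)))" using length_le_code[of L] by auto
  next
    assume h: "\<forall>k\<le>length L. \<not> R p (list_encode (rev (drop k L)))"
    show "\<forall>k < Suc (list_encode L). \<not> R p (list_encode (rev (drop k L)))"
    proof (intro allI impI)
      fix k assume "k < Suc (list_encode L)"
      show "\<not> R p (list_encode (rev (drop k L)))"
      proof (cases "k \<le> length L")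
        case True then show ?thesis using h by simp
      next
        case False then show ?thesis using h[rule_format, of "length L"] by simp
      qed
    qed
  qed
  finally show ?thesis .
qed

subsection \<open>General topology of ideal spaces\<close>

lemma topspace_ideal: "topspace (ideal_space R) = {I. is_ideal R I}"
  unfolding ideal_space_def topology_generated_by_topspace basic_open_def
  by (auto simp: is_ideal_def)

lemma open_upclosed:
  assumes "openin (ideal_space R) U" "I \<in> U" "is_ideal R J" "I \<subseteq> J"
  shows "J \<in> U"
proof -
  have "generate_topology_on (range (basic_open R)) U"
    using assms(1) unfolding ideal_space_def by (rule openin_topology_generated_by)
  then show ?thesis using assms(2)
  proof (induction)
    case Empty then show ?case by simp
  next
    case (Int a b) then show ?case by blast
  next
    case (UN K) then show ?case by blast
  next
    case (Basis s) then show ?case using assms(3,4) by (auto simp: basic_open_def subset_iff)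
  qed
qed

lemma not_t1:
  assumes "is_ideal R I" "is_ideal R J" "I \<subseteq> J" "I \<noteq> J"
  shows "\<not> t1_space (ideal_space R)"
  unfolding t1_space_def topspace_ideal using assms open_upclosed by blast

lemma metrizable_single:
  assumes "{I. is_ideal R I} = {A}" "A \<in> basic_open R k"
  shows "metrizable_space (ideal_space R)"
proof -
  have "ideal_space R = discrete_topology {A}"
    unfolding topology_eq
  proof
    fix S
    show "openin (ideal_space R) S \<longleftrightarrow> openin (discrete_topology {A}) S"
    proof
      assume "openin (ideal_space R) S"
      then show "openin (discrete_topology {A}) S"
        using openin_subset[of "ideal_space R" S] assms(1) topspace_ideal[of R] by simp
    next
      assume "openin (discrete_topology {A}) S"
      then have "S = {} \<or> S = {A}" by auto
      moreover have "basic_open R k = {A}" using assms unfolding basic_open_def by auto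
      ultimately show "openin (ideal_space R) S"
        unfolding ideal_space_def by (metis openin_empty rangeI topology_generated_by_Basis)
    qed
  qed
  then show ?thesis by simp
qed

definition "E R p = {(i, j). bad R p i j = 0}"

lemma bad_zero: "bad R p i j = 0 \<longleftrightarrow> j = 0 \<or> (i \<noteq> 0 \<and> 2 \<le> j \<and> tlf (j - 1) = i - 1 \<and> deadc R p (j - 1) = 0)"
proof -
  have e: "1 - (1 - (a - b)) * (1 - (b - a)) = (if a = b then 0 else (1::nat))" for a b :: nat
    by (cases "a \<le> b") auto
  show ?thesis unfolding bad_def e by auto
qed

lemma E_to0: "(k, 0) \<in> E R p" unfolding E_def by (simp add: bad_zero)
lemma E_from0: "(0, j) \<in> E R p \<Longrightarrow> j = 0" unfolding E_def by (simp add: bad_zero)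

lemma Et_from0: "(0, j) \<in> (E R p)\<^sup>+ \<Longrightarrow> j = 0"
  by (induction rule: trancl_induct) (auto dest: E_from0)

lemma aliveL_rev: "aliveL R p (rev l) \<longleftrightarrow> (\<forall>m \<le> length l. \<not> R p (list_encode (take m l)))"
proof -
  have "(\<forall>k \<le> length l. \<not> R p (list_encode (rev (drop k (rev l))))) \<longleftrightarrow>
        (\<forall>k \<le> length l. \<not> R p (list_encode (take (length l - k) l)))"
    by (simp add: drop_rev)
  also have "\<dots> \<longleftrightarrow> (\<forall>m \<le> length l. \<not> R p (list_encode (take m l)))"
  proof
    assume h: "\<forall>k \<le> length l. \<not> R p (list_encode (take (length l - k) l))"
    show "\<forall>m \<le> length l. \<not> R p (list_encode (take m l))"
    proof (intro allI impI)
      fix m assume "m \<le> length l"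
      then show "\<not> R p (list_encode (take m l))" using h[rule_format, of "length l - m"] by simp
    qed
  qed auto
  finally show ?thesis unfolding aliveL_def by simp
qed

lemma E_node_edge:
  assumes "(Suc (list_encode L), j) \<in> E R p" "j \<noteq> 0"
  shows "\<exists>y. j = Suc (list_encode (y # L)) \<and> aliveL R p (y # L)"
proof -
  from assms have h: "2 \<le> j" "tlf (j - 1) = list_encode L" "deadc R p (j - 1) = 0"
    unfolding E_def by (auto simp: bad_zero)
  obtain M where M: "j - 1 = list_encode M" by (metis list_decode_inverse)
  with h(1) have "M \<noteq> []" by (cases M) auto
  then obtain y M' where yM: "M = y # M'" by (cases M) auto
  then have "M' = L" using h(2) M by (simp add: list_encode_eq[symmetric] del: list_encode.simps) (simp)
  then have "j = Suc (list_encode (y # L))" using M yM h(1) by (metis Suc_diff_1 less_le_trans pos2)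
  moreover have "aliveL R p (y # L)" using h(3) M yM \<open>M' = L\<close> deadc_code by metis
  ultimately show ?thesis by blast
qed

lemma E_node_edgeI:
  assumes "aliveL R p (y # L)"
  shows "(Suc (list_encode L), Suc (list_encode (y # L))) \<in> E R p"
proof -
  have "deadc R p (list_encode (y # L)) = 0" using assms deadc_code by metis
  then show ?thesis unfolding E_def by (simp add: bad_zero del: list_encode.simps) (simp)
qed

abbreviation "nd l \<equiv> Suc (list_encode (rev l))"

lemma path_E:
  assumes "(nd l, j) \<in> (E R p)\<^sup>+"
  shows "j = 0 \<or> (\<exists>l'. j = nd l' \<and> aliveL R p (rev l') \<and> length l < length l' \<and> take (length l) l' = l)"
  using assms
proof (induction rule: trancl_induct)
  case (base y)
  show ?case
  proof (cases "y = 0")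
    case False
    from E_node_edge[OF base False] obtain x where "y = Suc (list_encode (x # rev l))" "aliveL R p (x # rev l)"
      by blast
    then show ?thesis by (intro disjI2 exI[of _ "l @ [x]"]) simp
  qed simp
next
  case (step y z)
  show ?case
  proof (cases "z = 0")
    case False
    then have "y \<noteq> 0" by (metis E_from0 step(2))
    then obtain l' where l': "y = nd l'" "length l < length l'" "take (length l) l' = l" using step(3) by blast
    from E_node_edge[OF step(2)[unfolded l'(1)] False] obtain x where
      "z = Suc (list_encode (x # rev l'))" "aliveL R p (x # rev l')" by blast
    then show ?thesis using l' by (intro disjI2 exI[of _ "l' @ [x]"]) simp
  qed simp
qed

lemma nd_surj: "i \<noteq> 0 \<Longrightarrow> \<exists>l. i = nd l"
  by (rule exI[of _ "rev (list_decode (i - 1))"]) simp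

lemma idealD:
  assumes "is_ideal R I"
  shows "j \<in> I \<Longrightarrow> (i, j) \<in> R \<Longrightarrow> i \<in> I"
    and "i \<in> I \<Longrightarrow> j \<in> I \<Longrightarrow> \<exists>k\<in>I. (i, k) \<in> R \<and> (j, k) \<in> R"
    and "I \<noteq> {}"
  using assms unfolding is_ideal_def by blast+

lemma ideal_UNIV: "is_ideal ((E R p)\<^sup>+) UNIV"
  unfolding is_ideal_def using E_to0 by blast

lemma ideals_F:
  assumes pF: "\<forall>f. \<exists>n. R p (list_encode (map f [0..<n]))" and I: "is_ideal ((E R p)\<^sup>+) I"
  shows "I = UNIV"
proof (cases "0 \<in> I")
  case True
  have "k \<in> I" for k using idealD(1)[OF I True r_into_trancl[OF E_to0]] .
  then show ?thesis by blast
next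
  case False
  define J where "J = {l. nd l \<in> I \<and> aliveL R p (rev l)}"
  have ext: "\<exists>l' \<in> J. length l < length l' \<and> take (length l) l' = l" if h: "nd l \<in> I" for l
  proof -
    obtain k where k: "k \<in> I" "(nd l, k) \<in> (E R p)\<^sup>+" using idealD(2)[OF I h h] by blast
    have "k \<noteq> 0" proof assume "k = 0" then show False using k(1) False by simp qed
    then obtain l' where l': "k = nd l'" "aliveL R p (rev l')" "length l < length l'" "take (length l) l' = l"
      using path_E[OF k(2)] by blast
    then have "l' \<in> J" unfolding J_def using k(1) by simp
    then show ?thesis using l' by blast
  qed
  have unb: "\<exists>l \<in> J. n \<le> length l" for n
  proof (induction n)
    case 0
    obtain i where "i \<in> I" using idealD(3)[OF I] by blast
    then obtain l where "nd l \<in> I" using False nd_surj by metis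
    then show ?case using ext by blast
  next
    case (Suc n)
    then obtain l where l: "l \<in> J" "n \<le> length l" by blast
    then have "nd l \<in> I" unfolding J_def by blast
    then obtain l' where "l' \<in> J" "length l < length l'" using ext by blast
    then show ?case using l by (intro bexI[of _ l']) auto
  qed
  have nodes: "\<exists>l3. k = nd l3 \<and> take (length l) l3 = l" if "k \<in> I" "(nd l, k) \<in> (E R p)\<^sup>+" for k l
  proof -
    have "k \<noteq> 0" proof assume "k = 0" then show False using that(1) False by simp qed
    then show ?thesis using path_E[OF that(2)] by blast
  qed
  have comp: "\<exists>l3. take (length l1) l3 = l1 \<and> take (length l2) l3 = l2" if h1: "l1 \<in> J" and h2: "l2 \<in> J" for l1 l2
  proof -
    have m: "nd l1 \<in> I" "nd l2 \<in> I" using h1 h2 unfolding J_def by auto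
    obtain k where k: "k \<in> I" "(nd l1, k) \<in> (E R p)\<^sup>+" "(nd l2, k) \<in> (E R p)\<^sup>+"
      using idealD(2)[OF I m] by blast
    obtain l3 where l3: "k = nd l3" "take (length l1) l3 = l1" using nodes[OF k(1,2)] by blast
    obtain l3' where l3': "k = nd l3'" "take (length l2) l3' = l2" using nodes[OF k(1,3)] by blast
    have "list_encode (rev l3) = list_encode (rev l3')" using l3(1) l3'(1) by simp
    then have "l3 = l3'" by (simp only: list_encode_eq rev_is_rev_conv)
    then show ?thesis using l3 l3' by blast
  qed
  define f where "f m = (SOME l. l \<in> J \<and> m < length l) ! m" for m
  have fval: "f m = l ! m" if hl: "l \<in> J" "m < length l" for l m
  proof -
    have "\<exists>l. l \<in> J \<and> m < length l" using hl by blast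
    then have s: "(SOME l. l \<in> J \<and> m < length l) \<in> J \<and> m < length (SOME l. l \<in> J \<and> m < length l)"
      by (rule someI_ex)
    define l0 where "l0 = (SOME l. l \<in> J \<and> m < length l)"
    from s have l0: "l0 \<in> J" "m < length l0" unfolding l0_def by auto
    obtain l3 where "take (length l0) l3 = l0" "take (length l) l3 = l" using comp[OF l0(1) hl(1)] by blast
    then have "l0 ! m = l3 ! m" "l ! m = l3 ! m" using l0(2) hl(2) nth_take by metis+
    then show ?thesis unfolding f_def l0_def[symmetric] by simp
  qed
  obtain n where n: "R p (list_encode (map f [0..<n]))" using pF by blast
  obtain l where l: "l \<in> J" "n \<le> length l" using unb by blast
  have "map f [0..<n] = take n l"
    by (rule nth_equalityI) (use l fval in auto)
  moreover have "\<not> R p (list_encode (take n l))" using l unfolding J_def aliveL_rev by auto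
  ultimately show ?thesis using n by simp
qed

lemma ideals_notF:
  assumes f: "\<forall>n. \<not> R p (list_encode (map f [0..<n]))"
  shows "\<exists>B. is_ideal ((E R p)\<^sup>+) B \<and> B \<noteq> UNIV"
proof -
  define c where "c n = nd (map f [0..<n])" for n
  have alive: "aliveL R p (rev (map f [0..<n]))" for n
    unfolding aliveL_rev using f by (simp add: take_map)
  have edge: "(c n, c (Suc n)) \<in> E R p" for n
  proof -
    have "rev (map f [0..<Suc n]) = f n # rev (map f [0..<n])" by simp
    then show ?thesis unfolding c_def using E_node_edgeI[of R p "f n" "rev (map f [0..<n])"] alive[of "Suc n"]
      by simp
  qed
  have chain: "(c n, c (Suc (n + d))) \<in> (E R p)\<^sup>+" for n d
  proof (induction d)
    case 0 then show ?case using edge by auto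
  next
    case (Suc d) then show ?case using edge[of "Suc (n + d)"] by (simp add: trancl_into_trancl)
  qed
  have pred: "i \<in> range c" if "(i, c n) \<in> E R p" for i n
  proof -
    from that have h: "i \<noteq> 0" "2 \<le> c n" "tlf (c n - 1) = i - 1" unfolding E_def c_def by (auto simp: bad_zero)
    then have "n \<noteq> 0" unfolding c_def by (cases n) auto
    then obtain m where m: "n = Suc m" by (cases n) auto
    have "tlf (c n - 1) = list_encode (rev (map f [0..<m]))" unfolding c_def m by simp
    then have "i = c m" using h unfolding c_def by simp
    then show ?thesis by simp
  qed
  have down: "i \<in> range c" if "(i, j) \<in> (E R p)\<^sup>+" "j \<in> range c" for i j
    using that
  proof (induction rule: converse_trancl_induct)
    case (base y) then show ?case using pred by blast
  next
    case (step y z) then show ?case using pred by blast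
  qed
  have "is_ideal ((E R p)\<^sup>+) (range c)"
    unfolding is_ideal_def
  proof (intro conjI ballI allI impI)
    show "range c \<noteq> {}" by simp
  next
    fix j i assume "j \<in> range c" "(i, j) \<in> (E R p)\<^sup>+" then show "i \<in> range c" using down by blast
  next
    fix i j assume "i \<in> range c" "j \<in> range c"
    then obtain a b where ab: "i = c a" "j = c b" by blast
    have "(c a, c (Suc (max a b))) \<in> (E R p)\<^sup>+" using chain[of a "max a b - a"] by simp
    moreover have "(c b, c (Suc (max a b))) \<in> (E R p)\<^sup>+" using chain[of b "max a b - b"] by simp
    ultimately show "\<exists>k\<in>range c. (i, k) \<in> (E R p)\<^sup>+ \<and> (j, k) \<in> (E R p)\<^sup>+" using ab by blast
  qed
  moreover have "0 \<notin> range c" unfolding c_def by auto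
  then have "range c \<noteq> UNIV" by blast
  ultimately show ?thesis by blast
qed

lemma encode_inj: "encode r = encode s \<Longrightarrow> r = s"
proof (induction r arbitrary: s)
  case (Comp f gs)
  then show ?case
  proof (cases s)
    case (Comp f' gs')
    with Comp.prems have e: "encode f = encode f'" "map encode gs = map encode gs'"
      by (auto simp: prod_encode_eq list_encode_eq)
    have "f = f'" using Comp.IH(1) e(1) by blast
    moreover have "gs = gs'"
      using e(2) Comp.IH(2)
    proof (induction gs arbitrary: gs')
      case Nil then show ?case by simp
    next
      case (Cons a gs) then show ?case by (cases gs') auto
    qed
    ultimately show ?thesis using Comp by simp
  qed (auto simp: prod_encode_eq)
qed (case_tac s; auto simp: prod_encode_eq)+

lemma W_enc: "W (encode r) = {x. \<exists>y. eval r [x] y}"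
  unfolding W_def using encode_inj by blast

lemma V_Prog:
  assumes hr: "\<And>a b. eval r0 [a, b] (Rv R a b)"
  shows "V (encode (Prog r0 p)) = E R p"
  unfolding V_def W_enc E_def using Prog_dom[OF hr] fstf_sndf by auto

definition "EK = Prim Zr (Comp PE [K 3, Comp PE [K 2, Comp Sc [Comp PE [Proj 0, Zr]]]])"

lemma pe10: "prod_encode (1, 0) = 2" by (simp add: prod_encode_def)
lemma pe10': "prod_encode (Suc 0, 0) = 2" by (simp add: prod_encode_def)
lemma pe00: "prod_encode (0, 0) = 0" by (simp add: prod_encode_def)

lemma EKI: "eval EK [p] (encode (K p))"
  unfolding EK_def
proof (induction p)
  case 0 show ?case by (rule ev_Prim0, rule eqI, (rule evB)+, simp add: pe00)
next
  case (Suc n) show ?case by (rule ev_PrimS[OF Suc.IH], rule eqI, (rule evB PEI)+, simp add: pe10 pe10')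
qed

definition "G r0 = Comp PE [K 3, Comp PE [K (encode (Mn (H r0))), Comp Sc [Comp PE [EK, K (list_encode [encode (Proj 0)])]]]]"

lemma GI: "eval (G r0) [p] (encode (Prog r0 p))"
  unfolding G_def Prog_def by (rule eqI, (rule evB PEI EKI)+, simp)

lemma ce_UNIV: "ce_set UNIV"
proof -
  have "W (encode Zr) = UNIV" unfolding W_enc using ev_Zr by blast
  then show ?thesis unfolding ce_set_def by metis
qed

theorem theorem25:
  fixes F :: "nat set"
  assumes "Pi11 F"
  shows "\<exists>g. computable g \<and>
    (\<forall>p. ce_space_index (g p) \<and>
         (p \<in> F \<longrightarrow> metrizable_space (iota (g p))) \<and>
         (p \<notin> F \<longrightarrow> \<not> t1_space (iota (g p))))"
proof -
  obtain R where R: "computable_rel2 R" and F: "\<And>p. p \<in> F \<longleftrightarrow> (\<forall>f::nat \<Rightarrow> nat. \<exists>n. R p (list_encode (map f [0..<n])))"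
    using assms unfolding Pi11_def by blast
  obtain r0 where r0: "\<And>a b. eval r0 [a, b] (if R a b then 1 else 0)"
    using R unfolding computable_rel2_def by blast
  have hr: "\<And>a b. eval r0 [a, b] (Rv R a b)" using r0 unfolding Rv_def .
  define g where "g p = encode (Prog r0 p)" for p
  have iota: "iota (g p) = ideal_space ((E R p)\<^sup>+)" for p
    unfolding iota_def g_def V_Prog[OF hr] ..
  have Vg: "V (g p) = E R p" for p unfolding g_def V_Prog[OF hr] ..
  have "computable g" unfolding computable_def g_def using GI by blast
  moreover have "ce_space_index (g p)" for p
  proof -
    have "{k. basic_open ((V (g p))\<^sup>+) k \<noteq> {}} = UNIV"
      unfolding Vg basic_open_def using ideal_UNIV by blast
    then show ?thesis unfolding ce_space_index_def using ce_UNIV by simp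
  qed
  moreover have "metrizable_space (iota (g p))" if "p \<in> F" for p
  proof -
    have "{I. is_ideal ((E R p)\<^sup>+) I} = {UNIV}"
      using ideals_F[of R p] ideal_UNIV[of R p] that F by blast
    moreover have "UNIV \<in> basic_open ((E R p)\<^sup>+) 0" unfolding basic_open_def using ideal_UNIV by blast
    ultimately show ?thesis unfolding iota by (rule metrizable_single)
  qed
  moreover have "\<not> t1_space (iota (g p))" if np: "p \<notin> F" for p
  proof -
    obtain f :: "nat \<Rightarrow> nat" where "\<forall>n. \<not> R p (list_encode (map f [0..<n]))" using np F by blast
    then obtain B where "is_ideal ((E R p)\<^sup>+) B" "B \<noteq> UNIV" using ideals_notF by blast
    then show ?thesis unfolding iota using not_t1[OF _ ideal_UNIV] by blast
  qed
  ultimately show ?thesis by blast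
qed

end
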